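(* Let $X$ be a geodesically complete locally compact CAT(0)-space and let $a\colon\mathbb R\to X$ be a complete geodesic. Then the sets $\omega^+(a)$ and $\omega^-(a)$ are at most countable.
   Context: $\Sigma_xX$ is the space of directions at $x$ (with the Alexandrov angle metric $\angle_x$); directions $\xi,\eta\in\Sigma_xX$ are mutually inverse if $\angle_x(\xi,\eta)=\pi$. $\omega^+(a)$ is the set of points $x\in a$ such that the direction at $x$ of the ray $[x\,a(+\infty)]$ has more than one inverse direction in $\Sigma_xX$; $\omega^-(a)$ is the set of points $x\in a$ such that the direction of the ray $[x\,a(-\infty)]$ has more than one inverse direction. *)

theory Defs
  imports "HOL-Analysis.Analysis"
begin

definition geodesic_segment :: "(real \<Rightarrow> 'a::metric_space) \<Rightarrow> 'a \<Rightarrow> 'a \<Rightarrow> bool" where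
  "geodesic_segment c x y \<longleftrightarrow> c 0 = x \<and> c (dist x y) = y \<and>
     (\<forall>s\<in>{0..dist x y}. \<forall>t\<in>{0..dist x y}. dist (c s) (c t) = \<bar>s - t\<bar>)"

definition complete_geodesic :: "(real \<Rightarrow> 'a::metric_space) \<Rightarrow> bool" where
  "complete_geodesic a \<longleftrightarrow> (\<forall>s t. dist (a s) (a t) = \<bar>s - t\<bar>)"

definition geodesic_space :: "'a::metric_space itself \<Rightarrow> bool" where
  "geodesic_space _ \<longleftrightarrow> (\<forall>x y::'a. \<exists>c. geodesic_segment c x y)"

definition cmp_side :: "complex \<Rightarrow> complex \<Rightarrow> real \<Rightarrow> complex" where
  "cmp_side P Q s = P + of_real (s / dist P Q) * (Q - P)"

definition CAT0 :: "'a::metric_space itself \<Rightarrow> bool" where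
  "CAT0 T \<longleftrightarrow> geodesic_space T \<and>
    (\<forall>(x::'a) y z g1 g2 g3 (X::complex) Y Z.
       geodesic_segment g1 x y \<and> geodesic_segment g2 y z \<and> geodesic_segment g3 z x \<and>
       dist X Y = dist x y \<and> dist Y Z = dist y z \<and> dist Z X = dist z x \<longrightarrow>
       (let sides = {(g1, cmp_side X Y, dist x y), (g2, cmp_side Y Z, dist y z),
                     (g3, cmp_side Z X, dist z x)}
        in \<forall>(c, C, l)\<in>sides. \<forall>(c', C', l')\<in>sides. \<forall>s\<in>{0..l}. \<forall>t\<in>{0..l'}.
             dist (c s) (c' t) \<le> dist (C s) (C' t)))"

definition geodesically_complete :: "'a::metric_space itself \<Rightarrow> bool" where
  "geodesically_complete _ \<longleftrightarrow>
     (\<forall>(x::'a) y c. geodesic_segment c x y \<longrightarrow>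
        (\<exists>a. complete_geodesic a \<and> (\<forall>s\<in>{0..dist x y}. a s = c s)))"

definition geodesic_from :: "'a::metric_space \<Rightarrow> (real \<Rightarrow> 'a) \<Rightarrow> bool" where
  "geodesic_from x c \<longleftrightarrow> c 0 = x \<and>
     (\<exists>e>0. \<forall>s\<in>{0..e}. \<forall>t\<in>{0..e}. dist (c s) (c t) = \<bar>s - t\<bar>)"

definition comparison_angle :: "'a::metric_space \<Rightarrow> 'a \<Rightarrow> 'a \<Rightarrow> real" where
  "comparison_angle x p q =
     arccos (((dist x p)\<^sup>2 + (dist x q)\<^sup>2 - (dist p q)\<^sup>2) / (2 * dist x p * dist x q))"

definition alex_angle :: "'a::metric_space \<Rightarrow> (real \<Rightarrow> 'a) \<Rightarrow> (real \<Rightarrow> 'a) \<Rightarrow> real" where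
  "alex_angle x c c' = (INF e\<in>{0<..}. Sup ((\<lambda>(s,t). comparison_angle x (c s) (c' t)) ` ({0<..e} \<times> {0<..e})))"

text \<open>The space of directions Sigma_x X is the metric completion of the space of geodesic
  directions (geodesics from x modulo angle zero) with respect to the angle metric.
  A point of the completion is represented by an angle-Cauchy sequence of geodesics from x.\<close>
definition angle_cauchy :: "'a::metric_space \<Rightarrow> (nat \<Rightarrow> real \<Rightarrow> 'a) \<Rightarrow> bool" where
  "angle_cauchy x \<eta> \<longleftrightarrow> (\<forall>n. geodesic_from x (\<eta> n)) \<and>
     (\<forall>e>0. \<exists>N. \<forall>m\<ge>N. \<forall>n\<ge>N. alex_angle x (\<eta> m) (\<eta> n) < e)"

text \<open>The direction of the geodesic \<xi> at x has more than one inverse direction in Sigma_x X: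
  there are two distinct points of the completion at angle pi from it.\<close>
definition several_inverses :: "'a::metric_space \<Rightarrow> (real \<Rightarrow> 'a) \<Rightarrow> bool" where
  "several_inverses x \<xi> \<longleftrightarrow>
     (\<exists>\<eta> \<eta>'. angle_cauchy x \<eta> \<and> angle_cauchy x \<eta>' \<and>
        (\<lambda>n. alex_angle x \<xi> (\<eta> n)) \<longlonglongrightarrow> pi \<and>
        (\<lambda>n. alex_angle x \<xi> (\<eta>' n)) \<longlonglongrightarrow> pi \<and>
        \<not> ((\<lambda>n. alex_angle x (\<eta> n) (\<eta>' n)) \<longlonglongrightarrow> 0))"

text \<open>omega^+(a): points x = a s of a where the direction of the ray [x a(+\<infinity>)],
  i.e. t \<mapsto> a (s + t), has more than one inverse direction; omega^-(a) likewise for the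
  ray [x a(-\<infinity>)], i.e. t \<mapsto> a (s - t).\<close>
definition omega_plus :: "(real \<Rightarrow> 'a::metric_space) \<Rightarrow> 'a set" where
  "omega_plus a = {x. \<exists>s. x = a s \<and> several_inverses x (\<lambda>t. a (s + t))}"

definition omega_minus :: "(real \<Rightarrow> 'a::metric_space) \<Rightarrow> 'a set" where
  "omega_minus a = {x. \<exists>s. x = a s \<and> several_inverses x (\<lambda>t. a (s - t))}"

end

theory Submission
  imports Defs
begin

definition Kc :: "'a::metric_space \<Rightarrow> 'a \<Rightarrow> 'a \<Rightarrow> real" where
  "Kc x p q = ((dist x p)\<^sup>2 + (dist x q)\<^sup>2 - (dist p q)\<^sup>2) / (2 * dist x p * dist x q)"

lemma comparison_angle_Kc: "comparison_angle x p q = arccos (Kc x p q)"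
  unfolding comparison_angle_def Kc_def by simp

lemma Kc_sym: "Kc x p q = Kc x q p"
  unfolding Kc_def by (simp add: dist_commute algebra_simps)

lemma Kc_bound: "\<bar>Kc x p q\<bar> \<le> 1"
proof (cases "dist x p = 0 \<or> dist x q = 0")
  case True then show ?thesis unfolding Kc_def by auto
next
  case False
  define A where "A = dist x p"
  define B where "B = dist x q"
  define C where "C = dist p q"
  have A: "A > 0" "B > 0" using False zero_le_dist unfolding A_def B_def
    by (metis dual_order.order_iff_strict)+
  have t1: "C \<le> A + B" unfolding A_def B_def C_def by (metis dist_commute dist_triangle)
  have t2: "\<bar>A - B\<bar> \<le> C" unfolding A_def B_def C_def
    by (smt (verit) dist_commute dist_triangle)
  have C0: "C \<ge> 0" unfolding C_def by simp
  have "C\<^sup>2 \<le> (A+B)\<^sup>2" using t1 C0 by (simp add: power_mono)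
  moreover have "(A-B)\<^sup>2 \<le> C\<^sup>2" using t2
    by (metis abs_le_square_iff abs_of_nonneg C0)
  ultimately have "-(2*A*B) \<le> A\<^sup>2 + B\<^sup>2 - C\<^sup>2" "A\<^sup>2 + B\<^sup>2 - C\<^sup>2 \<le> 2*A*B"
    by (simp_all add: power2_eq_square algebra_simps)
  then show ?thesis using A unfolding Kc_def A_def[symmetric] B_def[symmetric] C_def[symmetric]
    by (simp add: abs_le_iff divide_le_eq le_divide_eq)
qed

lemma comparison_angle_bounds: "0 \<le> comparison_angle x p q" "comparison_angle x p q \<le> pi"
  using Kc_bound[of x p q] unfolding comparison_angle_Kc
  by (auto intro!: arccos_lbound arccos_ubound)

lemma CN:
  assumes cat: "CAT0 TYPE('a::metric_space)"
    and g: "geodesic_segment g x y" and s: "0 \<le> s" "s \<le> dist x y" and A0: "dist x y > 0"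
  shows "dist x y * (dist (g s) (z::'a))\<^sup>2 \<le> dist x y * (s\<^sup>2 + (dist x z)\<^sup>2) - s * ((dist x y)\<^sup>2 + (dist x z)\<^sup>2 - (dist y z)\<^sup>2)"
proof -
  from cat have gs: "geodesic_space TYPE('a)" unfolding CAT0_def by blast
  obtain g2 where g2: "geodesic_segment g2 y z" using gs unfolding geodesic_space_def by blast
  obtain g3 where g3: "geodesic_segment g3 z x" using gs unfolding geodesic_space_def by blast
  define A where "A = dist x y"
  define b where "b = dist x z"
  define c where "c = dist y z"
  have A: "A > 0" using A0 A_def by simp
  have b0: "b \<ge> 0" "c \<ge> 0" unfolding b_def c_def by simp_all
  have t1: "c \<le> A + b" unfolding A_def b_def c_def by (metis dist_commute dist_triangle)
  have t2: "\<bar>A - b\<bar> \<le> c" unfolding A_def b_def c_def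
    by (smt (verit) dist_commute dist_triangle)
  have "c\<^sup>2 \<le> (A+b)\<^sup>2" using t1 b0 by (simp add: power_mono)
  moreover have "(A-b)\<^sup>2 \<le> c\<^sup>2" using t2
    by (metis abs_le_square_iff abs_of_nonneg b0(2))
  ultimately have h1: "-(2*A*b) \<le> A\<^sup>2 + b\<^sup>2 - c\<^sup>2" "A\<^sup>2 + b\<^sup>2 - c\<^sup>2 \<le> 2*A*b"
    by (simp_all add: power2_eq_square algebra_simps)
  define u where "u = (A\<^sup>2 + b\<^sup>2 - c\<^sup>2) / (2*A)"
  have "\<bar>u\<bar> \<le> b" using h1 A unfolding u_def by (simp add: abs_le_iff divide_le_eq le_divide_eq algebra_simps)
  then have ub: "u\<^sup>2 \<le> b\<^sup>2" using b0 by (metis abs_le_square_iff abs_of_nonneg)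
  define v where "v = sqrt (b\<^sup>2 - u\<^sup>2)"
  have v2: "v\<^sup>2 = b\<^sup>2 - u\<^sup>2" unfolding v_def using ub by simp
  define X where "X = (0::complex)"
  define Y where "Y = complex_of_real A"
  define Z where "Z = Complex u v"
  have uA: "2*A*u = A\<^sup>2 + b\<^sup>2 - c\<^sup>2" unfolding u_def using A by simp
  have dXY: "dist X Y = dist x y" unfolding X_def Y_def A_def dist_complex_def by simp
  have "(dist Y Z)\<^sup>2 = (A - u)\<^sup>2 + v\<^sup>2" unfolding Y_def Z_def dist_complex_def cmod_def
    by (simp add: power2_eq_square)
  also have "\<dots> = c\<^sup>2" using v2 uA by (simp add: power2_eq_square algebra_simps)
  finally have dYZ: "dist Y Z = dist y z" unfolding c_def
    by (metis power2_eq_imp_eq zero_le_dist)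
  have "(dist Z X)\<^sup>2 = u\<^sup>2 + v\<^sup>2" unfolding X_def Z_def dist_complex_def cmod_def
    by (simp add: power2_eq_square)
  also have "\<dots> = b\<^sup>2" using v2 by simp
  finally have dZX: "dist Z X = dist z x" unfolding b_def
    by (metis power2_eq_imp_eq zero_le_dist dist_commute)
  have H: "let sides = {(g, cmp_side X Y, dist x y), (g2, cmp_side Y Z, dist y z),
                     (g3, cmp_side Z X, dist z x)}
        in \<forall>(c, C, l)\<in>sides. \<forall>(c', C', l')\<in>sides. \<forall>s\<in>{0..l}. \<forall>t\<in>{0..l'}.
             dist (c s) (c' t) \<le> dist (C s) (C' t)"
    using cat g g2 g3 dXY dYZ dZX unfolding CAT0_def by blast
  have "dist (g s) (g3 0) \<le> dist (cmp_side X Y s) (cmp_side Z X 0)"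
    using H s unfolding Let_def by auto
  moreover have "g3 0 = z" using g3 unfolding geodesic_segment_def by simp
  moreover have "cmp_side X Y s = complex_of_real s" unfolding cmp_side_def X_def Y_def
    using A by (simp add: dist_complex_def)
  moreover have "cmp_side Z X 0 = Z" unfolding cmp_side_def by simp
  ultimately have d1: "dist (g s) z \<le> dist (complex_of_real s) Z" by simp
  have "(dist (complex_of_real s) Z)\<^sup>2 = (s - u)\<^sup>2 + v\<^sup>2" unfolding Z_def dist_complex_def cmod_def
    by (simp add: power2_eq_square)
  also have "\<dots> = s\<^sup>2 - 2 * s * u + b\<^sup>2" using v2 by (simp add: power2_eq_square algebra_simps)
  finally have "(dist (g s) z)\<^sup>2 \<le> s\<^sup>2 - 2 * s * u + b\<^sup>2" using d1
    by (metis power_mono zero_le_dist)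
  then have "A * (dist (g s) z)\<^sup>2 \<le> A * (s\<^sup>2 - 2 * s * u + b\<^sup>2)" using A by simp
  also have "\<dots> = A * (s\<^sup>2 + b\<^sup>2) - s * (2*A*u)" by (simp add: algebra_simps)
  finally show ?thesis using uA unfolding A_def b_def c_def by simp
qed

definition gv :: "'a::metric_space \<Rightarrow> (real \<Rightarrow> 'a) \<Rightarrow> real \<Rightarrow> bool" where
  "gv x c e \<longleftrightarrow> c 0 = x \<and> (\<forall>s\<in>{0..e}. \<forall>t\<in>{0..e}. dist (c s) (c t) = \<bar>s - t\<bar>)"

lemma gv_dist: "gv x c e \<Longrightarrow> 0 \<le> s \<Longrightarrow> s \<le> e \<Longrightarrow> dist x (c s) = s"
  unfolding gv_def by (metis atLeastAtMost_iff abs_of_nonneg diff_zero dual_order.trans order_refl dist_commute)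

lemma gv_dist2: "gv x c e \<Longrightarrow> 0 \<le> s \<Longrightarrow> s \<le> e \<Longrightarrow> 0 \<le> t \<Longrightarrow> t \<le> e \<Longrightarrow> dist (c s) (c t) = \<bar>s - t\<bar>"
  unfolding gv_def by auto

lemma gv_mono: "gv x c e \<Longrightarrow> e' \<le> e \<Longrightarrow> gv x c e'"
  unfolding gv_def by auto

lemma gv_seg: assumes "gv x c e" "0 \<le> s" "s \<le> e" shows "geodesic_segment c x (c s)"
  using assms gv_dist[OF assms] unfolding geodesic_segment_def gv_def by auto

lemma K_mono1:
  assumes cat: "CAT0 TYPE('a::metric_space)" and g: "gv x c e"
    and s: "0 < s'" "s' \<le> s" "s \<le> e" and z: "dist x (z::'a) > 0"
  shows "Kc x (c s) z \<le> Kc x (c s') z"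
proof -
  have ds: "dist x (c s) = s" using gv_dist[OF g] s by simp
  have ds': "dist x (c s') = s'" using gv_dist[OF g] s by simp
  have "s * (dist (c s') z)\<^sup>2 \<le> s * (s'\<^sup>2 + (dist x z)\<^sup>2) - s' * (s\<^sup>2 + (dist x z)\<^sup>2 - (dist (c s) z)\<^sup>2)"
    using CN[OF cat gv_seg[OF g, of s], of s' z] s ds by simp
  then have h: "s' * (s\<^sup>2 + (dist x z)\<^sup>2 - (dist (c s) z)\<^sup>2) \<le> s * (s'\<^sup>2 + (dist x z)\<^sup>2 - (dist (c s') z)\<^sup>2)"
    by (simp add: algebra_simps)
  define b where "b = dist x z"
  have b: "b > 0" using z b_def by simp
  have "Kc x (c s) z = (s' * (s\<^sup>2 + b\<^sup>2 - (dist (c s) z)\<^sup>2)) / (2 * s * s' * b)"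
    unfolding Kc_def ds b_def using s z by (simp add: field_simps)
  also have "\<dots> \<le> (s * (s'\<^sup>2 + b\<^sup>2 - (dist (c s') z)\<^sup>2)) / (2 * s * s' * b)"
    using h b s unfolding b_def by (intro divide_right_mono) auto
  also have "\<dots> = Kc x (c s') z"
    unfolding Kc_def ds' b_def using s z by (simp add: field_simps)
  finally show ?thesis .
qed

lemma K_mono:
  assumes cat: "CAT0 TYPE('a::metric_space)" and g: "gv (x::'a) c e" and g': "gv x c' e'"
    and s: "0 < s'" "s' \<le> s" "s \<le> e" and t: "0 < t'" "t' \<le> t" "t \<le> e'"
  shows "Kc x (c s) (c' t) \<le> Kc x (c s') (c' t')"
proof -
  have "Kc x (c s) (c' t) \<le> Kc x (c s') (c' t)"
    using K_mono1[OF cat g s, of "c' t"] gv_dist[OF g', of t] t by simp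
  also have "\<dots> = Kc x (c' t) (c s')" by (rule Kc_sym)
  also have "\<dots> \<le> Kc x (c' t') (c s')"
    using K_mono1[OF cat g' t, of "c s'"] gv_dist[OF g, of s'] s by simp
  also have "\<dots> = Kc x (c s') (c' t')" by (rule Kc_sym)
  finally show ?thesis .
qed

lemma dist_K:
  assumes g: "gv x c e" and g': "gv x c' e'" and s: "0 < s" "s \<le> e" and t: "0 < t" "t \<le> e'"
  shows "(dist (c s) (c' t))\<^sup>2 = s\<^sup>2 + t\<^sup>2 - 2 * s * t * Kc x (c s) (c' t)"
  using gv_dist[OF g, of s] gv_dist[OF g', of t] s t unfolding Kc_def by (simp add: field_simps)

lemma Sup_cmp_bounds:
  fixes e :: real
  assumes "e > 0"
  shows "0 \<le> Sup ((\<lambda>(s,t). comparison_angle x (c s) (c' t)) ` ({0<..e} \<times> {0<..e}))"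
    and "Sup ((\<lambda>(s,t). comparison_angle x (c s) (c' t)) ` ({0<..e} \<times> {0<..e})) \<le> pi"
proof -
  let ?S = "(\<lambda>(s,t). comparison_angle x (c s) (c' t)) ` ({0<..e} \<times> {0<..e})"
  have bd: "bdd_above ?S" using comparison_angle_bounds by (auto intro!: bdd_aboveI[of _ pi])
  have mem: "comparison_angle x (c e) (c' e) \<in> ?S"
    by (rule image_eqI[where x="(e,e)"]) (use assms in auto)
  have ne: "?S \<noteq> {}" using mem by blast
  show "0 \<le> Sup ?S" by (rule cSup_upper2[OF mem comparison_angle_bounds(1) bd])
  show "Sup ?S \<le> pi" using ne comparison_angle_bounds(2) by (auto intro!: cSup_least)
qed

lemma alex_bounds: "0 \<le> alex_angle x c c'" "alex_angle x c c' \<le> pi"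
proof -
  let ?F = "\<lambda>e. Sup ((\<lambda>(s,t). comparison_angle x (c s) (c' t)) ` ({0<..e} \<times> {0<..e}))"
  have "?F ` {0<..} \<noteq> {}" by auto
  then show "0 \<le> alex_angle x c c'" unfolding alex_angle_def
    using Sup_cmp_bounds(1) by (auto intro!: cInf_greatest)
  have bd: "bdd_below (?F ` {0<..})" using Sup_cmp_bounds(1) by (auto intro!: bdd_belowI[of _ 0])
  have "alex_angle x c c' \<le> ?F 1" unfolding alex_angle_def by (rule cInf_lower[OF _ bd]) auto
  then show "alex_angle x c c' \<le> pi" using Sup_cmp_bounds(2)[of 1 x c c'] by simp
qed

lemma P1:
  assumes cat: "CAT0 TYPE('a::metric_space)" and g: "gv (x::'a) c e" and g': "gv x c' e'"
    and s: "0 < s" "s \<le> e" and t: "0 < t" "t \<le> e'"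
  shows "alex_angle x c c' \<le> comparison_angle x (c s) (c' t)"
proof -
  let ?F = "\<lambda>e. Sup ((\<lambda>(s,t). comparison_angle x (c s) (c' t)) ` ({0<..e} \<times> {0<..e}))"
  define e0 where "e0 = min s t"
  have e0: "e0 > 0" using s t e0_def by simp
  have bd: "bdd_below (?F ` {0<..})" using Sup_cmp_bounds(1) by (auto intro!: bdd_belowI[of _ 0])
  have "alex_angle x c c' \<le> ?F e0" unfolding alex_angle_def by (rule cInf_lower[OF _ bd]) (use e0 in auto)
  also have "?F e0 \<le> comparison_angle x (c s) (c' t)"
  proof (rule cSup_least)
    show "(\<lambda>(s,t). comparison_angle x (c s) (c' t)) ` ({0<..e0} \<times> {0<..e0}) \<noteq> {}" using e0 by (simp add: image_is_empty)
  next
    fix y assume "y \<in> (\<lambda>(s,t). comparison_angle x (c s) (c' t)) ` ({0<..e0} \<times> {0<..e0})"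
    then obtain s' t' where st: "0 < s'" "s' \<le> e0" "0 < t'" "t' \<le> e0" and y: "y = comparison_angle x (c s') (c' t')"
      by auto
    have "Kc x (c s) (c' t) \<le> Kc x (c s') (c' t')"
      using K_mono[OF cat g g', of s' s t' t] st s t e0_def by simp
    then show "y \<le> comparison_angle x (c s) (c' t)" unfolding y comparison_angle_Kc
      using arccos_le_mono[OF Kc_bound Kc_bound] by blast
  qed
  finally show ?thesis .
qed

lemma cg_dist: "complete_geodesic a \<Longrightarrow> dist (a s) (a t) = \<bar>s - t\<bar>"
  unfolding complete_geodesic_def by blast

lemma cg_gv_minus: "complete_geodesic a \<Longrightarrow> gv (a s) (\<lambda>u. a (s - u)) e"
  unfolding gv_def complete_geodesic_def by (auto simp: abs_minus_commute)

lemma seg_gv: "geodesic_segment g y p \<Longrightarrow> gv y g (dist y p)"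
  unfolding gv_def geodesic_segment_def by auto

definition good :: "(real \<Rightarrow> 'a::metric_space) \<Rightarrow> real \<Rightarrow> real \<Rightarrow> real \<Rightarrow> (real \<Rightarrow> 'a) \<Rightarrow> bool" where
  "good a \<kappa> r s c \<longleftrightarrow> gv (a s) c r \<and> (\<forall>t\<in>{0<..r}. \<kappa> * t \<le> dist (c t) (a (s - t))) \<and>
     (\<forall>t\<in>{0<..r}. \<forall>u>0. t\<^sup>2 + u\<^sup>2 + 2 * t * u * (1 - \<kappa>\<^sup>2 / 8) \<le> (dist (c t) (a (s + u)))\<^sup>2)"

lemma good_mono: "good a \<kappa> r s c \<Longrightarrow> \<rho> \<le> r \<Longrightarrow> good a \<kappa> \<rho> s c"
  unfolding good_def using gv_mono by fastforce

lemma sep: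
  assumes cat: "CAT0 TYPE('a::metric_space)" and a: "complete_geodesic (a :: real \<Rightarrow> 'a)"
    and k: "0 < \<kappa>" "\<kappa> \<le> 1" and r: "0 < r"
    and gc: "good a \<kappa> r s c" and gc': "good a \<kappa> r s' c'" and ss: "s < s'"
  shows "\<kappa> * r / 2 \<le> dist (c r) (c' r)"
proof -
  define x where "x = a s"
  define y where "y = a s'"
  define d where "d = s' - s"
  define p where "p = c r"
  define q where "q = c' r"
  define \<theta> where "\<theta> = 1 - \<kappa>\<^sup>2 / 8"
  have d: "d > 0" using ss d_def by simp
  have "\<kappa>\<^sup>2 \<le> 1" using k by (simp add: power_le_one)
  then have th: "0 \<le> \<theta>" "\<theta> \<le> 1" unfolding \<theta>_def by auto
  have gvc: "gv x c r" using gc unfolding good_def x_def by simp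
  have gvc': "gv y c' r" using gc' unfolding good_def y_def by simp
  have G1': "\<forall>t\<in>{0<..r}. \<kappa> * t \<le> dist (c' t) (a (s' - t))" using gc' unfolding good_def by simp
  have G2: "\<forall>t\<in>{0<..r}. \<forall>u>0. t\<^sup>2 + u\<^sup>2 + 2 * t * u * \<theta> \<le> (dist (c t) (a (s + u)))\<^sup>2"
    using gc unfolding good_def \<theta>_def by simp
  have dxy: "dist y x = d" unfolding x_def y_def d_def using cg_dist[OF a] ss by simp
  have dxp: "dist x p = r" unfolding p_def using gv_dist[OF gvc, of r] r by simp
  have dyq: "dist y q = r" unfolding q_def using gv_dist[OF gvc', of r] r by simp
  define L where "L = dist y p"
  have "a (s + d) = y" unfolding y_def d_def by simp
  then have L2: "r\<^sup>2 + d\<^sup>2 + 2 * r * d * \<theta> \<le> L\<^sup>2" using G2 r d unfolding L_def p_def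
    by (auto simp: dist_commute)
  have Lle: "L \<le> d + r" unfolding L_def using dist_triangle[of y p x] dxy dxp by simp
  have "r\<^sup>2 \<le> L\<^sup>2" using L2 th r d by (smt (verit) mult_nonneg_nonneg zero_le_power2)
  then have Lr: "r \<le> L" using r by (metis L_def abs_le_square_iff abs_of_nonneg less_imp_le zero_le_dist)
  have L0: "L > 0" using Lr r by simp
  have "2 * d * L * \<theta> \<le> d\<^sup>2 + L\<^sup>2 - r\<^sup>2"
  proof -
    have "2 * d * L * \<theta> \<le> 2 * d * (d + r) * \<theta>" using Lle d th by (simp add: mult_right_mono)
    also have "\<dots> = 2 * d * d * \<theta> + 2 * r * d * \<theta>" by (simp add: algebra_simps)
    also have "\<dots> \<le> 2 * d * d + 2 * r * d * \<theta>" using d th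
      by (simp add: mult_left_le)
    also have "\<dots> \<le> d\<^sup>2 + L\<^sup>2 - r\<^sup>2" using L2 by (simp add: power2_eq_square)
    finally show ?thesis .
  qed
  then have Kxp: "\<theta> \<le> Kc y x p" unfolding Kc_def dxy L_def[symmetric] dxp using d L0
    by (simp add: le_divide_eq mult.commute mult.left_commute)
  obtain g where g: "geodesic_segment g y p"
    using cat unfolding CAT0_def geodesic_space_def by blast
  have gvg: "gv y g L" using seg_gv[OF g] L_def by simp
  have gvm: "gv y (\<lambda>u. a (s' - u)) d" using cg_gv_minus[OF a] y_def by simp
  define t0 where "t0 = min d r"
  have t0: "0 < t0" "t0 \<le> d" "t0 \<le> r" "t0 \<le> L" using d r Lr unfolding t0_def by auto
  have gL: "g L = p" using g unfolding geodesic_segment_def L_def by simp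
  have "Kc y (a (s' - d)) (g L) \<le> Kc y (a (s' - t0)) (g t0)"
    using K_mono[OF cat gvm gvg, of t0 d t0 L] t0 d L0 by simp
  then have K1: "\<theta> \<le> Kc y (a (s' - t0)) (g t0)" using Kxp gL d_def x_def by simp
  have "(dist (a (s' - t0)) (g t0))\<^sup>2 = t0\<^sup>2 + t0\<^sup>2 - 2 * t0 * t0 * Kc y (a (s' - t0)) (g t0)"
    using dist_K[OF gvm gvg, of t0 t0] t0 by simp
  also have "\<dots> \<le> t0\<^sup>2 + t0\<^sup>2 - 2 * t0 * t0 * \<theta>" using K1 t0 by simp
  also have "\<dots> = (\<kappa> * t0 / 2)\<^sup>2" unfolding \<theta>_def by (simp add: power2_eq_square field_simps)
  finally have "dist (a (s' - t0)) (g t0) \<le> \<kappa> * t0 / 2"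
    using k t0 by (metis abs_le_square_iff abs_of_nonneg divide_nonneg_pos mult_nonneg_nonneg
        less_imp_le zero_le_dist zero_less_numeral)
  moreover have "\<kappa> * t0 \<le> dist (c' t0) (a (s' - t0))" using G1' t0 by simp
  ultimately have D1: "\<kappa> * t0 / 2 \<le> dist (c' t0) (g t0)"
    using dist_triangle[of "c' t0" "a (s' - t0)" "g t0"] by (simp add: dist_commute)
  have "(\<kappa> * t0 / 2)\<^sup>2 \<le> (dist (c' t0) (g t0))\<^sup>2"
    using D1 k t0 by (intro power_mono) auto
  also have "\<dots> = t0\<^sup>2 + t0\<^sup>2 - 2 * t0 * t0 * Kc y (c' t0) (g t0)"
    using dist_K[OF gvc' gvg, of t0 t0] t0 by simp
  finally have "(t0 * t0) * (\<kappa>\<^sup>2 / 8 + Kc y (c' t0) (g t0)) \<le> (t0 * t0) * 1" using t0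
    by (simp add: power2_eq_square field_simps)
  then have "\<kappa>\<^sup>2 / 8 + Kc y (c' t0) (g t0) \<le> 1" using t0 by (simp add: mult_le_cancel_left_pos)
  then have "Kc y (c' t0) (g t0) \<le> 1 - \<kappa>\<^sup>2 / 8" by simp
  moreover have "Kc y (c' r) (g L) \<le> Kc y (c' t0) (g t0)"
    using K_mono[OF cat gvc' gvg, of t0 r t0 L] t0 r L0 by simp
  ultimately have K2: "Kc y q p \<le> \<theta>" unfolding q_def \<theta>_def gL by simp
  have "(dist q p)\<^sup>2 = r\<^sup>2 + L\<^sup>2 - 2 * r * L * Kc y q p"
    using dist_K[OF gvc' gvg, of r L] r L0 gL q_def by simp
  also have "\<dots> \<ge> r\<^sup>2 + L\<^sup>2 - 2 * r * L * \<theta>" using K2 r L0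
    by (simp add: mult_left_mono)
  finally have h: "r\<^sup>2 + L\<^sup>2 - 2 * r * L * \<theta> \<le> (dist q p)\<^sup>2" .
  have "r\<^sup>2 + L\<^sup>2 - 2 * r * L * \<theta> = (L - r)\<^sup>2 + r * L * \<kappa>\<^sup>2 / 4"
    unfolding \<theta>_def by (simp add: power2_eq_square field_simps)
  also have "\<dots> \<ge> r * r * \<kappa>\<^sup>2 / 4" using Lr r
    by (smt (verit) divide_right_mono mult_left_mono mult_right_mono zero_le_power2 less_imp_le)
  finally have "(\<kappa> * r / 2)\<^sup>2 \<le> (dist q p)\<^sup>2" using h by (simp add: power2_eq_square field_simps)
  then have "\<kappa> * r / 2 \<le> dist q p"
    using k r by (metis abs_le_square_iff abs_of_nonneg divide_nonneg_pos mult_nonneg_nonneg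
        less_imp_le zero_le_dist zero_less_numeral)
  then show ?thesis unfolding p_def q_def by (simp add: dist_commute)
qed

lemma sep_finite:
  fixes K :: "'a::metric_space set"
  assumes K: "compact K" and S: "S \<subseteq> K" and e: "\<epsilon> > 0"
    and sep: "\<And>x y. x \<in> S \<Longrightarrow> y \<in> S \<Longrightarrow> x \<noteq> y \<Longrightarrow> \<epsilon> \<le> dist x y"
  shows "finite S"
proof (rule ccontr)
  assume inf: "infinite S"
  obtain z where "z \<in> K" "z islimpt S" using Heine_Borel_imp_Bolzano_Weierstrass[OF K inf S] by blast
  then have "infinite (S \<inter> ball z (\<epsilon>/2))" using e by (simp add: islimpt_eq_infinite_ball)
  then obtain u v where uv: "u \<in> S \<inter> ball z (\<epsilon>/2)" "v \<in> S \<inter> ball z (\<epsilon>/2)" "u \<noteq> v"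
    by (metis finite.emptyI finite_insert infinite_imp_nonempty insertCI subsetI finite_subset ex_in_conv)
  have "dist u v \<le> dist z u + dist z v" by (metis dist_commute dist_triangle)
  also have "\<dots> < \<epsilon>" using uv by auto
  finally show False using sep uv by force
qed

lemma count_good:
  assumes cat: "CAT0 TYPE('a::metric_space)" and a: "complete_geodesic (a :: real \<Rightarrow> 'a)"
    and lc: "locally_compact_space (euclidean :: 'a topology)"
    and k: "0 < \<kappa>" "\<kappa> \<le> 1" and r: "0 < r"
  shows "countable {s. \<exists>c. good a \<kappa> r s c}"
proof -
  define U where "U = {s. \<exists>c. good a \<kappa> r s c}"
  define C where "C s = (SOME c. good a \<kappa> r s c)" for s
  have C: "good a \<kappa> r s (C s)" if "s \<in> U" for s
    using that unfolding U_def C_def by (metis (mono_tags, lifting) mem_Collect_eq someI_ex)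
  have fin: "finite (U \<inter> {- real N..real N})" for N
  proof (rule ccontr)
    assume inf: "infinite (U \<inter> {- real N..real N})"
    obtain s0 where s0: "s0 islimpt (U \<inter> {- real N..real N})"
      using Heine_Borel_imp_Bolzano_Weierstrass[OF compact_Icc inf] by blast
    obtain V K where VK: "open V" "compact K" "a s0 \<in> V" "V \<subseteq> K"
      using lc unfolding locally_compact_space_def by (auto simp: open_openin[symmetric]) blast
    obtain \<rho> where \<rho>: "\<rho> > 0" "ball (a s0) \<rho> \<subseteq> V" using VK open_contains_ball by blast
    define r' where "r' = min r (\<rho>/2)"
    have r': "0 < r'" "r' \<le> r" "r' \<le> \<rho>/2" using r \<rho> unfolding r'_def by auto
    define T where "T = U \<inter> {- real N..real N} \<inter> ball s0 (\<rho>/2)"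
    have Tinf: "infinite T" using s0 \<rho> unfolding T_def by (simp add: islimpt_eq_infinite_ball)
    define F where "F s = C s r'" for s
    have gT: "good a \<kappa> r' s (C s)" if "s \<in> T" for s
      using good_mono[OF C r'(2)] that T_def by auto
    have FK: "F ` T \<subseteq> K"
    proof
      fix y assume "y \<in> F ` T"
      then obtain s where s: "s \<in> T" "y = F s" by auto
      have "dist (a s) y = r'" using gv_dist[of "a s" "C s" r' r'] gT[OF s(1)] r' s(2)
        unfolding good_def F_def by simp
      moreover have "dist (a s0) (a s) < \<rho>/2" using s(1) cg_dist[OF a] unfolding T_def
        by (auto simp: dist_real_def)
      ultimately have "dist (a s0) y < \<rho>" using dist_triangle[of "a s0" y "a s"] r' by linarith
      then show "y \<in> K" using \<rho> VK by auto
    qed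
    have sepT: "\<kappa> * r' / 2 \<le> dist (F s) (F s')" if "s \<in> T" "s' \<in> T" "s \<noteq> s'" for s s'
    proof (cases "s < s'")
      case True then show ?thesis using sep[OF cat a k r'(1) gT[OF that(1)] gT[OF that(2)]] F_def by simp
    next
      case False then have "s' < s" using that by simp
      then show ?thesis using sep[OF cat a k r'(1) gT[OF that(2)] gT[OF that(1)]] F_def
        by (simp add: dist_commute)
    qed
    have injF: "inj_on F T"
    proof (rule inj_onI)
      fix s s' assume "s \<in> T" "s' \<in> T" "F s = F s'"
      then show "s = s'" using sepT[of s s'] k r' by (metis dist_self divide_pos_pos mult_pos_pos not_le zero_less_numeral)
    qed
    have "finite (F ` T)"
    proof (rule sep_finite[OF VK(2) FK])
      show "0 < \<kappa> * r' / 2" using k r' by simp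
    next
      fix y y' assume "y \<in> F ` T" "y' \<in> F ` T" "y \<noteq> y'"
      then show "\<kappa> * r' / 2 \<le> dist y y'" using sepT by auto
    qed
    then have "finite T" using injF finite_image_iff by blast
    then show False using Tinf by simp
  qed
  have "U = (\<Union>N. U \<inter> {- real N..real N})"
  proof (rule set_eqI, rule iffI)
    fix s assume "s \<in> U"
    obtain N where "\<bar>s\<bar> \<le> real N" using real_arch_simple by blast
    then show "s \<in> (\<Union>N. U \<inter> {- real N..real N})" using \<open>s \<in> U\<close> by (auto simp: abs_le_iff intro!: exI[of _ N])
  qed auto
  moreover have "countable (\<Union>N. U \<inter> {- real N..real N})"
    using fin by (intro countable_UN) (auto intro: countable_finite)
  ultimately show ?thesis unfolding U_def by simp
qed

lemma gv_plus: "complete_geodesic a \<Longrightarrow> gv (a s) (\<lambda>u. a (s + u)) e"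
  unfolding gv_def complete_geodesic_def by auto

lemma ratio_mono:
  assumes cat: "CAT0 TYPE('a::metric_space)" and g: "gv (x::'a) c e" and g': "gv x c' e"
    and t: "0 < t" "t \<le> t'" "t' \<le> e" and k: "0 < \<kappa>" and lt: "dist (c t') (c' t') < \<kappa> * t'"
  shows "dist (c t) (c' t) < \<kappa> * t"
proof -
  have K: "Kc x (c t') (c' t') \<le> Kc x (c t) (c' t)" using K_mono[OF cat g g', of t t' t t'] t by simp
  have D: "(dist (c t') (c' t'))\<^sup>2 = 2 * t'\<^sup>2 * (1 - Kc x (c t') (c' t'))"
    using dist_K[OF g g', of t' t'] t by (simp add: algebra_simps power2_eq_square)
  have "(dist (c t) (c' t))\<^sup>2 = 2 * t\<^sup>2 * (1 - Kc x (c t) (c' t))"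
    using dist_K[OF g g', of t t] t by (simp add: algebra_simps power2_eq_square)
  also have "\<dots> \<le> 2 * t\<^sup>2 * (1 - Kc x (c t') (c' t'))" using K t by (simp add: mult_left_mono)
  also have "\<dots> = (t / t')\<^sup>2 * (2 * t'\<^sup>2 * (1 - Kc x (c t') (c' t')))"
    using t by (simp add: field_simps power2_eq_square)
  also have "\<dots> = (t / t')\<^sup>2 * (dist (c t') (c' t'))\<^sup>2"
    using D by simp
  also have "\<dots> < (t / t')\<^sup>2 * (\<kappa> * t')\<^sup>2"
    using lt t by (intro mult_strict_left_mono power_strict_mono) (auto simp: zero_less_power)
  also have "\<dots> = (\<kappa> * t)\<^sup>2" using t by (simp add: field_simps power2_eq_square)
  finally have "(dist (c t) (c' t))\<^sup>2 < (\<kappa> * t)\<^sup>2" .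
  then show ?thesis using k t by (smt (verit) mult_pos_pos power_mono zero_le_dist)
qed

lemma G2_from:
  assumes cat: "CAT0 TYPE('a::metric_space)" and a: "complete_geodesic (a :: real \<Rightarrow> 'a)"
    and g: "gv (a s) c e" and th: "0 \<le> \<theta>" "\<theta> \<le> 1"
    and ang: "arccos (- \<theta>) < alex_angle (a s) (\<lambda>t. a (s + t)) c"
    and t: "0 < t" "t \<le> e" and u: "0 < u"
  shows "t\<^sup>2 + u\<^sup>2 + 2 * t * u * \<theta> \<le> (dist (c t) (a (s + u)))\<^sup>2"
proof -
  define K where "K = Kc (a s) (a (s + u)) (c t)"
  have gp: "gv (a s) (\<lambda>t. a (s + t)) u" by (rule gv_plus[OF a])
  have P: "alex_angle (a s) (\<lambda>t. a (s + t)) c \<le> comparison_angle (a s) (a (s + u)) (c t)"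
    using P1[OF cat gp g, of u t] u t by blast
  have AA: "arccos (- \<theta>) < arccos K"
    using ang P unfolding comparison_angle_Kc K_def by linarith
  have b1: "\<bar>- \<theta>\<bar> \<le> 1" using th by simp
  have KK: "K < - \<theta>" using arccos_less_mono[OF b1 Kc_bound[of "a s" "a (s + u)" "c t"]] AA
    unfolding K_def by blast
  have D: "(dist (a (s + u)) (c t))\<^sup>2 = u\<^sup>2 + t\<^sup>2 - 2 * u * t * K"
    using dist_K[OF gp g, of u t] u t unfolding K_def by blast
  have "2 * u * t * \<theta> \<le> 2 * u * t * (- K)"
    using KK u t by (intro mult_left_mono) auto
  then show ?thesis using D by (simp add: dist_commute algebra_simps)
qed

lemma geodesic_from_gv: "geodesic_from x c \<Longrightarrow> \<exists>e>0. gv x c e"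
  unfolding geodesic_from_def gv_def by blast

lemma point_good:
  assumes cat: "CAT0 TYPE('a::metric_space)" and a: "complete_geodesic (a :: real \<Rightarrow> 'a)"
    and si: "several_inverses (a s) (\<lambda>t. a (s + t))"
  shows "\<exists>k m c. good a (1 / real (Suc k)) (1 / real (Suc m)) s c"
proof -
  define x where "x = a s"
  define \<xi> where "\<xi> = (\<lambda>t. a (s + t))"
  obtain \<eta> \<eta>' where ac: "angle_cauchy x \<eta>" "angle_cauchy x \<eta>'"
    and l1: "(\<lambda>n. alex_angle x \<xi> (\<eta> n)) \<longlonglongrightarrow> pi"
    and l2: "(\<lambda>n. alex_angle x \<xi> (\<eta>' n)) \<longlonglongrightarrow> pi"
    and nl: "\<not> ((\<lambda>n. alex_angle x (\<eta> n) (\<eta>' n)) \<longlonglongrightarrow> 0)"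
    using si unfolding several_inverses_def x_def \<xi>_def by blast
  obtain \<delta> where \<delta>: "\<delta> > 0" and freq: "\<forall>N. \<exists>n\<ge>N. \<delta> \<le> norm (alex_angle x (\<eta> n) (\<eta>' n) - 0)"
    using nl unfolding LIMSEQ_iff by (simp add: not_less) blast
  define \<delta>1 where "\<delta>1 = min \<delta> pi"
  have d1: "0 < \<delta>1" "\<delta>1 \<le> pi" "\<delta>1 \<le> \<delta>" using \<delta> pi_gt_zero unfolding \<delta>1_def by auto
  define \<omega> where "\<omega> = cos \<delta>1"
  have "cos \<delta>1 < cos 0" using d1 by (intro cos_monotone_0_pi) auto
  then have om: "\<omega> < 1" unfolding \<omega>_def by simp
  define \<kappa>0 where "\<kappa>0 = sqrt (2 * (1 - \<omega>)) / 2"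
  have k0: "\<kappa>0 > 0" using om unfolding \<kappa>0_def by simp
  obtain k where k: "inverse (real (Suc k)) < \<kappa>0" using reals_Archimedean[OF k0] by blast
  define \<kappa> where "\<kappa> = 1 / real (Suc k)"
  have kk: "0 < \<kappa>" "\<kappa> \<le> 1" "\<kappa> < \<kappa>0" using k unfolding \<kappa>_def by (auto simp: inverse_eq_divide)
  define \<theta> where "\<theta> = 1 - \<kappa>\<^sup>2 / 8"
  have "\<kappa>\<^sup>2 \<le> 1" using kk by (simp add: power_le_one)
  moreover have "\<kappa>\<^sup>2 > 0" using kk by simp
  ultimately have th: "0 \<le> \<theta>" "\<theta> < 1" unfolding \<theta>_def by auto
  define \<alpha> where "\<alpha> = arccos (- \<theta>)"
  have "arccos (- \<theta>) < arccos (-1)"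
    using arccos_less_mono[of "- \<theta>" "-1"] th by simp
  then have al: "\<alpha> < pi" unfolding \<alpha>_def by simp
  have pa: "pi - \<alpha> > 0" using al by simp
  obtain N1 where N1: "\<forall>n\<ge>N1. norm (alex_angle x \<xi> (\<eta> n) - pi) < pi - \<alpha>"
    using l1[unfolded LIMSEQ_iff, rule_format, OF pa] by blast
  obtain N2 where N2: "\<forall>n\<ge>N2. norm (alex_angle x \<xi> (\<eta>' n) - pi) < pi - \<alpha>"
    using l2[unfolded LIMSEQ_iff, rule_format, OF pa] by blast
  obtain n where n: "n \<ge> max N1 N2" "\<delta> \<le> norm (alex_angle x (\<eta> n) (\<eta>' n) - 0)" using freq by blast
  have "n \<ge> N1" "n \<ge> N2" using n(1) by auto
  then have "norm (alex_angle x \<xi> (\<eta> n) - pi) < pi - \<alpha>" "norm (alex_angle x \<xi> (\<eta>' n) - pi) < pi - \<alpha>"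
    using N1 N2 by blast+
  then have A1: "\<alpha> < alex_angle x \<xi> (\<eta> n)" and A2: "\<alpha> < alex_angle x \<xi> (\<eta>' n)"
    unfolding real_norm_def by linarith+
  have A3: "\<delta>1 \<le> alex_angle x (\<eta> n) (\<eta>' n)" using n(2) d1(3) alex_bounds(1)[of x "\<eta> n" "\<eta>' n"]
    unfolding real_norm_def by linarith
  have "geodesic_from x (\<eta> n)" "geodesic_from x (\<eta>' n)"
    using ac unfolding angle_cauchy_def by simp_all
  then obtain e1 e2 where e1: "e1 > 0" "gv x (\<eta> n) e1" and e2: "e2 > 0" "gv x (\<eta>' n) e2"
    using geodesic_from_gv by metis
  define e where "e = min e1 e2"
  have e: "e > 0" using e1 e2 e_def by simp
  have g1: "gv x (\<eta> n) e" using gv_mono[OF e1(2)] e_def by simp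
  have g2: "gv x (\<eta>' n) e" using gv_mono[OF e2(2)] e_def by simp
  have gm: "gv x (\<lambda>u. a (s - u)) e" using cg_gv_minus[OF a] x_def by simp
  have sepa: "2 * \<kappa> * t \<le> dist (\<eta> n t) (\<eta>' n t)" if t: "0 < t" "t \<le> e" for t
  proof -
    define K where "K = Kc x (\<eta> n t) (\<eta>' n t)"
    have "alex_angle x (\<eta> n) (\<eta>' n) \<le> arccos K"
      using P1[OF cat g1 g2, of t t] t unfolding K_def comparison_angle_Kc by simp
    then have "\<delta>1 \<le> arccos K" using A3 by simp
    moreover have "arccos K \<le> pi" "-1 \<le> K" "K \<le> 1" using Kc_bound[of x "\<eta> n t" "\<eta>' n t"] unfolding K_def
      by (auto intro!: arccos_ubound)
    ultimately have "cos (arccos K) \<le> cos \<delta>1" using d1 by (intro cos_monotone_0_pi_le) auto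
    then have KO: "K \<le> \<omega>" unfolding \<omega>_def using cos_arccos \<open>-1 \<le> K\<close> \<open>K \<le> 1\<close> by simp
    have "(dist (\<eta> n t) (\<eta>' n t))\<^sup>2 = 2 * t\<^sup>2 * (1 - K)"
      using dist_K[OF g1 g2, of t t] t unfolding K_def by (simp add: algebra_simps power2_eq_square)
    also have "\<dots> \<ge> 2 * t\<^sup>2 * (1 - \<omega>)" using KO by (simp add: mult_left_mono)
    finally have h: "2 * t\<^sup>2 * (1 - \<omega>) \<le> (dist (\<eta> n t) (\<eta>' n t))\<^sup>2" .
    have "(2 * \<kappa>0 * t)\<^sup>2 = 2 * t\<^sup>2 * (1 - \<omega>)" unfolding \<kappa>0_def using om
      by (simp add: power2_eq_square power_mult_distrib)
    then have "(2 * \<kappa>0 * t)\<^sup>2 \<le> (dist (\<eta> n t) (\<eta>' n t))\<^sup>2" using h by simp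
    then have "2 * \<kappa>0 * t \<le> dist (\<eta> n t) (\<eta>' n t)"
      by (rule power2_le_imp_le) simp
    moreover have "2 * \<kappa> * t \<le> 2 * \<kappa>0 * t" using kk t by simp
    ultimately show ?thesis by linarith
  qed
  have "\<exists>c\<in>{\<eta> n, \<eta>' n}. \<forall>t\<in>{0<..e}. \<kappa> * t \<le> dist (c t) (a (s - t))"
  proof (rule ccontr)
    assume "\<not> ?thesis"
    then obtain t1 t2 where t1: "t1 \<in> {0<..e}" "dist (\<eta> n t1) (a (s - t1)) < \<kappa> * t1"
      and t2: "t2 \<in> {0<..e}" "dist (\<eta>' n t2) (a (s - t2)) < \<kappa> * t2"
      by (auto simp: not_le)
    define t where "t = min t1 t2"
    have t: "0 < t" "t \<le> t1" "t \<le> t2" "t \<le> e" using t1 t2 t_def by auto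
    have "dist (\<eta> n t) (a (s - t)) < \<kappa> * t"
      using ratio_mono[OF cat g1 gm t(1) t(2) _ kk(1)] t1 by simp
    moreover have "dist (\<eta>' n t) (a (s - t)) < \<kappa> * t"
      using ratio_mono[OF cat g2 gm t(1) t(3) _ kk(1)] t2 by simp
    ultimately have "dist (\<eta> n t) (\<eta>' n t) < 2 * \<kappa> * t"
      using dist_triangle[of "\<eta> n t" "\<eta>' n t" "a (s - t)"] by (simp add: dist_commute)
    then show False using sepa[OF t(1) t(4)] by simp
  qed
  then obtain c where c: "c \<in> {\<eta> n, \<eta>' n}" and G1: "\<forall>t\<in>{0<..e}. \<kappa> * t \<le> dist (c t) (a (s - t))"
    by blast
  have gc: "gv (a s) c e" using c g1 g2 x_def by auto
  have Ac: "arccos (- \<theta>) < alex_angle (a s) (\<lambda>t. a (s + t)) c"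
    using c A1 A2 unfolding \<alpha>_def x_def \<xi>_def by auto
  have G2: "\<forall>t\<in>{0<..e}. \<forall>u>0. t\<^sup>2 + u\<^sup>2 + 2 * t * u * (1 - \<kappa>\<^sup>2 / 8) \<le> (dist (c t) (a (s + u)))\<^sup>2"
    using G2_from[OF cat a gc th(1) _ Ac] th unfolding \<theta>_def by auto
  have good: "good a \<kappa> e s c" unfolding good_def using gc G1 G2 by blast
  obtain m where m: "inverse (real (Suc m)) < e" using reals_Archimedean[OF e] by blast
  have "good a \<kappa> (1 / real (Suc m)) s c" using good_mono[OF good] m by (simp add: inverse_eq_divide)
  then show ?thesis unfolding \<kappa>_def by blast
qed

lemma count_plus:
  assumes cat: "CAT0 TYPE('a::metric_space)" and a: "complete_geodesic (a :: real \<Rightarrow> 'a)"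
    and lc: "locally_compact_space (euclidean :: 'a topology)"
  shows "countable (omega_plus a)"
proof -
  have sub: "omega_plus a \<subseteq> (\<Union>k. \<Union>m. a ` {s. \<exists>c. good a (1 / real (Suc k)) (1 / real (Suc m)) s c})"
  proof
    fix x assume "x \<in> omega_plus a"
    then obtain s where s: "x = a s" "several_inverses x (\<lambda>t. a (s + t))" unfolding omega_plus_def by blast
    then obtain k m c where "good a (1 / real (Suc k)) (1 / real (Suc m)) s c"
      using point_good[OF cat a] by blast
    then show "x \<in> (\<Union>k. \<Union>m. a ` {s. \<exists>c. good a (1 / real (Suc k)) (1 / real (Suc m)) s c})"
      using s(1) by blast
  qed
  have "countable {s. \<exists>c. good a (1 / real (Suc k)) (1 / real (Suc m)) s c}" for k m
    by (rule count_good[OF cat a lc]) auto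
  then have "countable (\<Union>k. \<Union>m. a ` {s. \<exists>c. good a (1 / real (Suc k)) (1 / real (Suc m)) s c})"
    by (intro countable_UN countable_image) auto
  then show ?thesis using sub countable_subset by blast
qed

theorem theorem7:
  fixes a :: "real \<Rightarrow> 'a::metric_space"
  assumes "CAT0 TYPE('a)"
    and "geodesically_complete TYPE('a)"
    and "locally_compact_space (euclidean :: 'a topology)"
    and "complete_geodesic a"
  shows "countable (omega_plus a) \<and> countable (omega_minus a)"
proof
  show "countable (omega_plus a)" using count_plus assms by blast
  define b where "b = (\<lambda>t. a (- t))"
  have b: "complete_geodesic b" unfolding complete_geodesic_def b_def
  proof (intro allI)
    fix s t :: real
    have "dist (a (- s)) (a (- t)) = \<bar>- s - - t\<bar>"
      using assms(4) unfolding complete_geodesic_def by blast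
    also have "\<dots> = \<bar>s - t\<bar>" by (smt (verit))
    finally show "dist (a (- s)) (a (- t)) = \<bar>s - t\<bar>" .
  qed
  have "omega_minus a \<subseteq> omega_plus b"
  proof
    fix x assume "x \<in> omega_minus a"
    then obtain s where s: "x = a s" "several_inverses x (\<lambda>t. a (s - t))" unfolding omega_minus_def by blast
    have "x = b (- s)" "(\<lambda>t. b (- s + t)) = (\<lambda>t. a (s - t))" using s unfolding b_def by auto
    then show "x \<in> omega_plus b" using s unfolding omega_plus_def
      by (intro CollectI exI[of _ "- s"]) simp
  qed
  moreover have "countable (omega_plus b)" using count_plus[OF assms(1) b assms(3)] .
  ultimately show "countable (omega_minus a)" using countable_subset by blast
qed

end
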